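(* Let $\boldsymbol{x}_p=[i_p,v_p]^{\intercal}$ be the unique $T$-periodic solution of the switched system, i.e. the solution with initial value $$\boldsymbol{x}_p(0)=\left(I-\mathrm{e}^{\frac{T}{2}A_2}\mathrm{e}^{\frac{T}{2}A_1}\right)^{-1}\mathrm{e}^{\frac{T}{2}A_2}A_1^{-1}\left(\mathrm{e}^{\frac{T}{2}A_1}-I\right)\boldsymbol{b}_1 .$$ Then $i_p(0)=i_p(T/2)=i_p(T)$.
   Context: Let $R,L,C,V_{dc},T>0$. Let $\boldsymbol{x}(t)=[i(t),v(t)]^{\intercal}$. Define $$A_1=\begin{bmatrix}-\frac RL & -\frac1L\\ \frac1C & 0\end{bmatrix},\quad A_2=\begin{bmatrix}-\frac RL & \frac1L\\ -\frac1C & 0\end{bmatrix},\quad \boldsymbol{b}_1=\begin{bmatrix}\frac{V_{dc}}L\\ 0\end{bmatrix}.$$ The switched system on $t\ge0$ is: $\boldsymbol{x}'=A_1\boldsymbol{x}+\boldsymbol{b}_1$ on each interval $[(k-1)T,(k-1)T+\frac T2]$ and $\boldsymbol{x}'=A_2\boldsymbol{x}$ on each interval $[(k-1)T+\frac T2,kT]$, $k=1,2,\dots$; solutions are continuous. The matrix $I-\mathrm{e}^{\frac T2A_2}\mathrm{e}^{\frac T2A_1}$ is invertible and the solution with the stated initial value is $T$-periodic. *)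

theory Defs
  imports "HOL-Analysis.Analysis"
begin

text \<open>Matrix powers and the matrix exponential (as the exponential power series)
  for square real matrices represented as \<open>real^'n^'n\<close> (rows indexed first).\<close>

fun mat_pow :: "real^'n^'n \<Rightarrow> nat \<Rightarrow> real^'n^'n" where
  "mat_pow A 0 = mat 1"
| "mat_pow A (Suc k) = A ** mat_pow A k"

definition mat_exp :: "real^'n^'n \<Rightarrow> real^'n^'n" where
  "mat_exp A = (\<Sum>k. (1 / fact k) *\<^sub>R mat_pow A k)"

definition A1 :: "real \<Rightarrow> real \<Rightarrow> real \<Rightarrow> real^2^2" where
  "A1 R L C = vector [vector [- R / L, - 1 / L], vector [1 / C, 0]]"

definition A2 :: "real \<Rightarrow> real \<Rightarrow> real \<Rightarrow> real^2^2" where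
  "A2 R L C = vector [vector [- R / L, 1 / L], vector [- 1 / C, 0]]"

definition b1 :: "real \<Rightarrow> real \<Rightarrow> real^2" where
  "b1 L Vdc = vector [Vdc / L, 0]"

end

theory Submission imports Defs begin

lemma mat_pow_Suc': "mat_pow A (Suc k) = mat_pow A k ** A"
  by (induction k) (auto simp: matrix_mul_assoc)

lemma scaleR_mmul_left: fixes A :: "real^'n^'m" shows "(c *\<^sub>R A) ** B = c *\<^sub>R (A ** B)"
  by (simp add: matrix_matrix_mult_def vec_eq_iff sum_distrib_left mult.assoc mult.left_commute)

lemma scaleR_mmul_right: fixes A :: "real^'n^'m" shows "A ** (c *\<^sub>R B) = c *\<^sub>R (A ** B)"
  by (simp add: matrix_matrix_mult_def vec_eq_iff sum_distrib_left mult.assoc mult.left_commute)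

lemma mat_pow_scaleR: "mat_pow (c *\<^sub>R A) k = (c ^ k) *\<^sub>R mat_pow A k"
  by (induction k) (auto simp: scaleR_mmul_left scaleR_mmul_right)

lemma mat_pow_comm: "A ** mat_pow A k = mat_pow A k ** A"
  by (simp only: mat_pow.simps(2)[symmetric] mat_pow_Suc')

lemma norm_mat_pow_vec: "norm (mat_pow A k *v v) \<le> onorm ((*v) A) ^ k * norm v"
proof (induction k arbitrary: v)
  case 0 then show ?case by simp
next
  case (Suc k)
  have "norm (mat_pow A (Suc k) *v v) = norm (mat_pow A k *v (A *v v))"
    by (simp only: mat_pow_Suc' matrix_vector_mul_assoc)
  also have "\<dots> \<le> onorm ((*v) A) ^ k * norm (A *v v)" by (rule Suc)
  also have "\<dots> \<le> onorm ((*v) A) ^ k * (onorm ((*v) A) * norm v)"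
    by (intro mult_left_mono onorm zero_le_power onorm_pos_le) auto
  finally show ?case by (simp add: algebra_simps)
qed

lemma norm_mat_le_onorm: fixes M :: "real^'n^'m"
  shows "norm M \<le> real CARD('m) * real CARD('n) * onorm ((*v) M)"
proof -
  have "norm M \<le> (\<Sum>i\<in>UNIV. norm (M $ i))"
    unfolding norm_vec_def by (rule L2_set_le_sum) auto
  also have "\<dots> \<le> (\<Sum>i\<in>(UNIV::'m set). \<Sum>j\<in>(UNIV::'n set). onorm ((*v) M))"
    by (intro sum_mono order_trans[OF norm_le_l1_cart] matrix_component_le_onorm)
  finally show ?thesis by simp
qed

lemma onorm_mat_pow: fixes A :: "real^'n^'n"
  shows "onorm ((*v) (mat_pow A k)) \<le> onorm ((*v) A) ^ k"
  by (rule onorm_le) (simp add: norm_mat_pow_vec)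

lemma summable_mat_exp: fixes A :: "real^'n^'n"
  shows "summable (\<lambda>k. (1 / fact k) *\<^sub>R mat_pow A k)"
proof (rule summable_comparison_test)
  let ?c = "real CARD('n) * real CARD('n)"
  let ?K = "onorm ((*v) A)"
  show "summable (\<lambda>k. ?c * (inverse (fact k) * ?K ^ k))"
    by (intro summable_mult summable_exp)
  show "\<exists>N. \<forall>n\<ge>N. norm ((1 / fact n) *\<^sub>R mat_pow A n) \<le> ?c * (inverse (fact n) * ?K ^ n)"
  proof (intro exI allI impI)
    fix n :: nat
    have "norm (mat_pow A n) \<le> ?c * onorm ((*v) (mat_pow A n))" by (rule norm_mat_le_onorm)
    also have "\<dots> \<le> ?c * ?K ^ n" by (intro mult_left_mono onorm_mat_pow) auto
    finally have "norm (mat_pow A n) \<le> ?c * ?K ^ n" .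
    then show "norm ((1 / fact n) *\<^sub>R mat_pow A n) \<le> ?c * (inverse (fact n) * ?K ^ n)"
      by (simp add: field_simps)
  qed
qed

lemma bl_mv: "bounded_linear (\<lambda>M::real^'n^'m. M *v w)"
  apply (subst linear_conv_bounded_linear[symmetric])
  apply (rule linearI)
   apply (simp add: matrix_vector_mult_add_rdistrib)
  apply (simp add: scaleR_matrix_vector_assoc)
  done

lemma ode_exp:
  fixes A :: "real^'n^'n" and u :: "real \<Rightarrow> real^'n"
  assumes ab: "a \<le> b"
    and D: "\<And>t. t \<in> {a..b} \<Longrightarrow> (u has_vector_derivative A *v u t) (at t within {a..b})"
  shows "u b = mat_exp ((b - a) *\<^sub>R A) *v u a"
proof -
  define h where "h = b - a"
  define K where "K = onorm ((*v) A)"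
  have K0: "0 \<le> K" unfolding K_def by (rule onorm_pos_le) simp
  have h0: "0 \<le> h" using ab by (simp add: h_def)
  have cont: "continuous_on {a..b} u"
    using D by (meson continuous_on_eq_continuous_within has_vector_derivative_continuous)
  have "bounded (u ` {a..b})"
    by (rule compact_imp_bounded[OF compact_continuous_image[OF cont compact_Icc]])
  then obtain B where B: "\<And>t. t\<in>{a..b} \<Longrightarrow> norm (u t) \<le> B" and B0: "0 \<le> B"
    unfolding bounded_pos by (meson imageI less_imp_le)
  define Df where "Df m t = mat_pow A m *v u t" for m t
  have Df: "(Df m has_vector_derivative Df (Suc m) t) (at t within {a..b})" if "t\<in>{a..b}" for m t
  proof -
    have "((\<lambda>t. mat_pow A m *v u t) has_vector_derivative mat_pow A m *v (A *v u t)) (at t within {a..b})"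
      by (rule bounded_linear.has_vector_derivative[OF matrix_vector_mul_bounded_linear D[OF that]])
    then show ?thesis unfolding Df_def by (simp add: matrix_vector_mul_assoc mat_pow_comm)
  qed
  have Df0: "Df 0 = u" by (simp add: Df_def fun_eq_iff)
  define S where "S n = (\<Sum>i<Suc n. ((b-a)^i / fact i) *\<^sub>R Df i a)" for n
  define C where "C n = (K * B * h) * (inverse (fact n) * (K * h) ^ n)" for n
  have Rb: "norm (u b - S n) \<le> C n" for n
  proof -
    have HI: "((\<lambda>x. ((b - x) ^ (Suc n - 1) / fact (Suc n - 1)) *\<^sub>R Df (Suc n) x) has_integral u b - S n) {a..b}"
      unfolding S_def
      by (rule Taylor_has_integral[where Df=Df and f=u]) (use Df0 Df ab in auto)
    have bnd: "norm (((b - x) ^ (Suc n - 1) / fact (Suc n - 1)) *\<^sub>R Df (Suc n) x) \<le> (h ^ n / fact n) * (K ^ Suc n * B)"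
      if x: "x \<in> cbox a b" for x
    proof -
      have xab: "x \<in> {a..b}" using x by simp
      have "norm (Df (Suc n) x) \<le> K ^ Suc n * norm (u x)"
        unfolding Df_def K_def by (rule norm_mat_pow_vec)
      also have "\<dots> \<le> K ^ Suc n * B" by (intro mult_left_mono B xab) (simp add: K0)
      finally have 1: "norm (Df (Suc n) x) \<le> K ^ Suc n * B" .
      have 2: "\<bar>(b - x) ^ n / fact n\<bar> \<le> h ^ n / fact n"
        using xab by (auto simp: h_def power_abs intro!: divide_right_mono power_mono)
      show ?thesis using mult_mono[OF 2 1] by (simp add: B0 K0 h0)
    qed
    have "norm (u b - S n) \<le> (h ^ n / fact n) * (K ^ Suc n * B) * measure lborel (cbox a b)"
      by (rule has_integral_bound[OF _ _ bnd]) (use HI B0 K0 h0 in auto)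
    also have "measure lborel (cbox a b) = h" using ab by (simp add: h_def)
    then have "(h ^ n / fact n) * (K ^ Suc n * B) * measure lborel (cbox a b) = C n"
      unfolding C_def power_mult_distrib by (simp add: field_simps)
    finally show ?thesis by simp
  qed
  have C0: "C \<longlonglongrightarrow> 0"
    unfolding C_def by (intro tendsto_mult_right_zero summable_LIMSEQ_zero summable_exp)
  have R0: "(\<lambda>n. u b - S n) \<longlonglongrightarrow> 0"
    by (rule Lim_null_comparison[OF _ C0]) (simp add: Rb)
  have S1: "S \<longlonglongrightarrow> u b"
    using tendsto_diff[OF tendsto_const[of "u b"] R0] by simp
  define f where "f i = (1 / fact i) *\<^sub>R mat_pow (h *\<^sub>R A) i" for i
  have "(\<lambda>n. \<Sum>i<n. f i) \<longlonglongrightarrow> mat_exp (h *\<^sub>R A)"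
    unfolding mat_exp_def f_def by (rule summable_LIMSEQ[OF summable_mat_exp])
  then have "(\<lambda>n. (\<Sum>i<n. f i) *v u a) \<longlonglongrightarrow> mat_exp (h *\<^sub>R A) *v u a"
    by (rule bounded_linear.tendsto[OF bl_mv])
  then have L: "(\<lambda>n. (\<Sum>i<Suc n. f i) *v u a) \<longlonglongrightarrow> mat_exp (h *\<^sub>R A) *v u a"
    by (rule LIMSEQ_Suc)
  have "(\<Sum>i<Suc n. f i) *v u a = S n" for n
  proof -
    have "(\<Sum>i<Suc n. f i) *v u a = (\<Sum>i<Suc n. f i *v u a)"
      by (induction n) (simp_all add: matrix_vector_mult_add_rdistrib)
    also have "\<dots> = S n"
      unfolding S_def f_def Df_def h_def
      by (intro sum.cong refl) (simp add: mat_pow_scaleR scaleR_matrix_vector_assoc[symmetric])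
    finally show ?thesis .
  qed
  with L have "S \<longlonglongrightarrow> mat_exp (h *\<^sub>R A) *v u a" by simp
  from LIMSEQ_unique[OF S1 this] show ?thesis by (simp add: h_def)
qed


definition Sm :: "real^2^2" where "Sm = vector [vector [1, 0], vector [0, -1]]"

lemma Sm_sq: "Sm ** Sm = mat 1"
  by (simp add: Sm_def vec_eq_iff forall_2 matrix_matrix_mult_def sum_2 mat_def)

lemma A2_conj: "c *\<^sub>R A2 R L C = Sm ** (c *\<^sub>R A1 R L C) ** Sm"
  by (simp add: Sm_def A1_def A2_def vec_eq_iff forall_2 matrix_matrix_mult_def sum_2 mat_def)

lemma A1_d: "A1 R L C *v vector [0, Vdc] = - b1 L Vdc"
  by (simp add: A1_def b1_def vec_eq_iff forall_2 matrix_vector_mult_def sum_2)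

lemma Sm_d: "Sm *v vector [0, Vdc] = - vector [0, Vdc]"
  by (simp add: Sm_def vec_eq_iff forall_2 matrix_vector_mult_def sum_2)

lemma Sm_1: "(Sm *v v) $ 1 = v $ 1"
  by (simp add: Sm_def matrix_vector_mult_def sum_2)

lemma A1_inv: assumes "L > 0" "C > 0" shows "invertible (A1 R L C)"
  unfolding invertible_def
  apply (rule exI[of _ "vector [vector [0, C], vector [-L, -R*C]]"])
  using assms by (simp add: A1_def vec_eq_iff forall_2 matrix_matrix_mult_def sum_2 mat_def field_simps)


lemma bl_lmul: "bounded_linear (\<lambda>M::real^'n^'n. A ** M)"
  apply (subst linear_conv_bounded_linear[symmetric])
  apply (rule linearI)
   apply (simp add: matrix_add_ldistrib)
  apply (simp add: scaleR_mmul_right)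
  done

lemma bl_rmul: "bounded_linear (\<lambda>M::real^'n^'n. M ** A)"
  apply (subst linear_conv_bounded_linear[symmetric])
  apply (rule linearI)
   apply (simp add: matrix_matrix_mult_def vec_eq_iff sum.distrib distrib_right)
  apply (simp add: scaleR_mmul_left)
  done

lemma mat_pow_comm_gen: "A ** B = B ** A \<Longrightarrow> A ** mat_pow B k = mat_pow B k ** A"
  by (induction k) (simp_all add: matrix_mul_assoc, metis matrix_mul_assoc)

lemma mat_exp_comm: fixes A B :: "real^'n^'n"
  assumes "A ** B = B ** A" shows "A ** mat_exp B = mat_exp B ** A"
proof -
  have "A ** mat_exp B = (\<Sum>k. A ** ((1 / fact k) *\<^sub>R mat_pow B k))"
    unfolding mat_exp_def by (rule bounded_linear.suminf[OF bl_lmul summable_mat_exp])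
  also have "\<dots> = (\<Sum>k. ((1 / fact k) *\<^sub>R mat_pow B k) ** A)"
    by (simp add: scaleR_mmul_left scaleR_mmul_right mat_pow_comm_gen[OF assms])
  also have "\<dots> = mat_exp B ** A"
    unfolding mat_exp_def by (rule bounded_linear.suminf[OF bl_rmul summable_mat_exp, symmetric])
  finally show ?thesis .
qed

lemma mat_pow_conj: fixes S :: "real^'n^'n" assumes "S ** S = mat 1"
  shows "mat_pow (S ** A ** S) k = S ** mat_pow A k ** S"
proof (induction k)
  case 0 then show ?case using assms by simp
next
  case (Suc k)
  have "mat_pow (S ** A ** S) (Suc k) = S ** A ** (S ** S) ** mat_pow A k ** S"
    using Suc by (simp add: matrix_mul_assoc)
  also have "\<dots> = S ** mat_pow A (Suc k) ** S" using assms by (simp add: matrix_mul_assoc)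
  finally show ?case .
qed

lemma mat_exp_conj: fixes S :: "real^'n^'n" assumes "S ** S = mat 1"
  shows "mat_exp (S ** A ** S) = S ** mat_exp A ** S"
proof -
  have bl: "bounded_linear (\<lambda>M::real^'n^'n. S ** M ** S)"
    using bounded_linear_compose[OF bl_rmul[of S] bl_lmul[of S]] by simp
  have "S ** mat_exp A ** S = (\<Sum>k. S ** ((1 / fact k) *\<^sub>R mat_pow A k) ** S)"
    unfolding mat_exp_def by (rule bounded_linear.suminf[OF bl summable_mat_exp])
  also have "\<dots> = mat_exp (S ** A ** S)"
    unfolding mat_exp_def by (simp add: scaleR_mmul_left scaleR_mmul_right mat_pow_conj[OF assms])
  finally show ?thesis ..
qed


lemma mm_diff_r: fixes X :: "real^'n^'m" shows "(X - Y) ** Z = X ** Z - Y ** Z"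
  by (simp add: matrix_matrix_mult_def vec_eq_iff sum_subtractf left_diff_distrib)

lemma mm_diff_l: fixes X :: "real^'n^'m" shows "X ** (Y - Z) = X ** Y - X ** Z"
  by (simp add: matrix_matrix_mult_def vec_eq_iff sum_subtractf right_diff_distrib)

lemma mv_neg: fixes X :: "real^'n^'m" shows "X *v (- v) = - (X *v v)"
  by (simp add: matrix_vector_mult_def vec_eq_iff sum_negf)

lemma matrix_inv_both: fixes A :: "real^'n^'m" assumes "invertible A"
  shows "A ** matrix_inv A = mat 1 \<and> matrix_inv A ** A = mat 1"
  using assms unfolding invertible_def matrix_inv_def by (rule someI_ex)

lemma matrix_inv_left: fixes A :: "real^'n^'m" assumes "invertible A" shows "matrix_inv A ** A = mat 1"
  using matrix_inv_both[OF assms] by simp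

lemma matrix_inv_right: fixes A :: "real^'n^'m" assumes "invertible A" shows "A ** matrix_inv A = mat 1"
  using matrix_inv_both[OF assms] by simp

theorem proposition1:
  fixes R L C Vdc T :: real and x :: "real \<Rightarrow> real^2"
  assumes pos: "R > 0" "L > 0" "C > 0" "Vdc > 0" "T > 0"
    and inv: "invertible (mat 1 - mat_exp ((T / 2) *\<^sub>R A2 R L C) ** mat_exp ((T / 2) *\<^sub>R A1 R L C))"
    and cont: "continuous_on {0..} x"
    and ode1: "\<And>(k::nat) t. k \<ge> 1 \<Longrightarrow> t \<in> {(real k - 1) * T .. (real k - 1) * T + T / 2} \<Longrightarrow>
       (x has_vector_derivative (A1 R L C *v x t + b1 L Vdc))
         (at t within {(real k - 1) * T .. (real k - 1) * T + T / 2})"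
    and ode2: "\<And>(k::nat) t. k \<ge> 1 \<Longrightarrow> t \<in> {(real k - 1) * T + T / 2 .. real k * T} \<Longrightarrow>
       (x has_vector_derivative (A2 R L C *v x t))
         (at t within {(real k - 1) * T + T / 2 .. real k * T})"
    and init: "x 0 = matrix_inv (mat 1 - mat_exp ((T / 2) *\<^sub>R A2 R L C) ** mat_exp ((T / 2) *\<^sub>R A1 R L C))
        *v (mat_exp ((T / 2) *\<^sub>R A2 R L C) ** matrix_inv (A1 R L C)
            ** (mat_exp ((T / 2) *\<^sub>R A1 R L C) - mat 1) *v b1 L Vdc)"
  shows "x 0 $ 1 = x (T / 2) $ 1 \<and> x (T / 2) $ 1 = x T $ 1"
proof -
  define A where "A = A1 R L C"
  define E where "E = mat_exp ((T / 2) *\<^sub>R A)"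
  define E2 where "E2 = mat_exp ((T / 2) *\<^sub>R A2 R L C)"
  define M where "M = mat 1 - E2 ** E"
  define d :: "real^2" where "d = vector [0, Vdc]"
  define P where "P = Sm ** E"
  define x0 where "x0 = x 0"
  define y where "y = x (T / 2)"
  have E2E: "E2 = Sm ** E ** Sm"
    unfolding E2_def E_def A_def by (simp add: A2_conj mat_exp_conj Sm_sq)
  have E2E': "E2 ** E = P ** P"
    unfolding E2E P_def by (simp add: matrix_mul_assoc)
  have Ainv: "matrix_inv A ** A = mat 1"
    unfolding A_def by (rule matrix_inv_left[OF A1_inv[OF pos(2,3)]])
  have AE: "A ** E = E ** A"
    unfolding E_def by (rule mat_exp_comm) (simp add: scaleR_mmul_left scaleR_mmul_right)
  have b1d: "b1 L Vdc = - (A *v d)" unfolding A_def d_def by (simp add: A1_d)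
  have c: "(E2 ** matrix_inv A ** (E - mat 1)) *v b1 L Vdc = E2 *v (d - E *v d)"
  proof -
    have "(E - mat 1) *v (A *v d) = A *v ((E - mat 1) *v d)"
      by (simp add: matrix_vector_mul_assoc mm_diff_r mm_diff_l AE)
    then have "(E - mat 1) *v b1 L Vdc = - (A *v ((E - mat 1) *v d))"
      by (simp only: b1d mv_neg)
    then have "matrix_inv A *v ((E - mat 1) *v b1 L Vdc) = - ((matrix_inv A ** A) *v ((E - mat 1) *v d))"
      by (simp only: mv_neg matrix_vector_mul_assoc matrix_mul_assoc)
    then have "matrix_inv A *v ((E - mat 1) *v b1 L Vdc) = - ((E - mat 1) *v d)"
      by (simp add: Ainv)
    then have h: "matrix_inv A *v ((E - mat 1) *v b1 L Vdc) = d - E *v d"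
      by (simp add: matrix_vector_mult_diff_rdistrib)
    have "(E2 ** matrix_inv A ** (E - mat 1)) *v b1 L Vdc = E2 *v (matrix_inv A *v ((E - mat 1) *v b1 L Vdc))"
      by (simp only: matrix_vector_mul_assoc matrix_mul_assoc)
    then show ?thesis by (simp only: h)
  qed
  have invM: "invertible M" using inv unfolding M_def E2_def E_def A_def .
  have Mx0: "M *v x0 = E2 *v (d - E *v d)"
  proof -
    have "x0 = matrix_inv M *v (E2 *v (d - E *v d))"
      unfolding x0_def init using c unfolding M_def E2_def E_def A_def by simp
    then show ?thesis
      by (simp add: matrix_vector_mul_assoc matrix_mul_assoc matrix_inv_right[OF invM])
  qed
  have y_eq: "y - d = E *v (x0 - d)"
  proof -
    have "(\<lambda>t. x t - d) (T/2) = mat_exp ((T/2 - 0) *\<^sub>R A) *v (\<lambda>t. x t - d) 0"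
    proof (rule ode_exp)
      show "0 \<le> T / 2" using pos by simp
      fix t assume t: "t \<in> {0..T/2}"
      have "(x has_vector_derivative (A *v x t + b1 L Vdc)) (at t within {0..T/2})"
        using ode1[of 1 t] t unfolding A_def by simp
      then have "((\<lambda>t. x t - d) has_vector_derivative (A *v x t + b1 L Vdc) - 0) (at t within {0..T/2})"
        by (intro has_vector_derivative_diff has_vector_derivative_const)
      moreover have "A *v x t + b1 L Vdc - 0 = A *v (x t - d)"
        by (simp add: b1d matrix_vector_mult_diff_distrib)
      ultimately show "((\<lambda>t. x t - d) has_vector_derivative A *v (x t - d)) (at t within {0..T/2})"
        by simp
    qed
    then show ?thesis unfolding y_def x0_def E_def by simp
  qed
  have xT: "x T = E2 *v y"
  proof -
    have "x T = mat_exp ((T - T/2) *\<^sub>R A2 R L C) *v x (T/2)"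
    proof (rule ode_exp)
      show "T / 2 \<le> T" using pos by simp
      fix t assume t: "t \<in> {T/2..T}"
      show "(x has_vector_derivative A2 R L C *v x t) (at t within {T/2..T})"
        using ode2[of 1 t] t by simp
    qed
    then show ?thesis unfolding y_def E2_def by simp
  qed
  have SS: "Sm ** Sm = mat 1" by (rule Sm_sq)
  have Sd: "Sm *v d = - d" unfolding d_def by (rule Sm_d)
  have star: "x0 - P *v (P *v x0) = - (P *v d) - P *v (P *v d)"
  proof -
    have "x0 - P *v (P *v x0) = M *v x0"
      unfolding M_def by (simp add: matrix_vector_mult_diff_rdistrib matrix_vector_mul_assoc E2E')
    also have "\<dots> = Sm *v (E *v (Sm *v d - Sm *v (E *v d)))"
      unfolding Mx0 E2E by (simp add: matrix_vector_mul_assoc matrix_vector_mult_diff_distrib matrix_mul_assoc mv_neg)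
    also have "\<dots> = - (P *v d) - P *v (P *v d)"
      unfolding Sd P_def by (simp add: matrix_vector_mul_assoc matrix_vector_mult_diff_distrib matrix_mul_assoc mv_neg)
    finally show ?thesis .
  qed
  define z where "z = P *v x0 - P *v d - x0"
  have Mz: "M *v z = 0"
  proof -
    have "M *v z = z - P *v (P *v z)"
      unfolding M_def by (simp add: matrix_vector_mult_diff_rdistrib matrix_vector_mul_assoc E2E')
    also have "\<dots> = P *v (x0 - P *v (P *v x0)) - (x0 - P *v (P *v x0)) - P *v d + P *v (P *v (P *v d))"
      unfolding z_def by (simp add: matrix_vector_mult_diff_distrib algebra_simps)
    also have "\<dots> = 0"
      unfolding star by (simp add: matrix_vector_mult_diff_distrib algebra_simps mv_neg)
    finally show ?thesis .
  qed
  have z0: "z = 0"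
  proof -
    have "z = (matrix_inv M ** M) *v z"
      using matrix_inv_left[OF invM] by simp
    also have "\<dots> = 0" by (simp add: matrix_vector_mul_assoc[symmetric] Mz)
    finally show ?thesis .
  qed
  have "E *v (x0 - d) = Sm *v x0"
  proof -
    have "Sm *v (E *v (x0 - d)) = x0"
      using z0 unfolding z_def P_def by (simp add: matrix_vector_mul_assoc matrix_vector_mult_diff_distrib matrix_mul_assoc mv_neg)
    then have "Sm *v (Sm *v (E *v (x0 - d))) = Sm *v x0" by simp
    then show ?thesis by (simp add: matrix_vector_mul_assoc matrix_mul_assoc SS)
  qed
  with y_eq have "y - d = Sm *v x0" by simp
  then have "y = Sm *v x0 + d" by (simp add: diff_eq_eq)
  then have y1: "y $ 1 = x0 $ 1" by (simp add: Sm_1 d_def)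
  have "x T = x0"
  proof -
    have "x T = E2 *v (E *v (x0 - d) + d)"
      unfolding xT using y_eq by (metis diff_add_cancel)
    also have "\<dots> = (E2 ** E) *v x0 + E2 *v (d - E *v d)"
      by (simp add: matrix_vector_mul_assoc matrix_vector_mult_diff_distrib matrix_vector_right_distrib algebra_simps)
    also have "\<dots> = (E2 ** E) *v x0 + M *v x0" by (simp add: Mx0)
    also have "\<dots> = x0" unfolding M_def by (simp add: matrix_vector_mult_diff_rdistrib)
    finally show ?thesis .
  qed
  then show ?thesis using y1 unfolding x0_def y_def by simp
qed

end
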